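(* Let $\mathcal M$ be a map and let $e\neq f$ be edges of $\mathcal M$. If $\mathcal M\setminus e/ f$ is defined (i.e. $e$ is not a bridge of $\mathcal M$ and $f$ is not a separating loop of $\mathcal M\setminus e$), then $\mathcal M/ f\setminus e$ is defined (i.e. $f$ is not a separating loop of $\mathcal M$ and $e$ is not a bridge of $\mathcal M/f$) and $\mathcal M\setminus e/ f=\mathcal M/ f\setminus e$.
   Context: A map is a triple $\mathcal M=(B,\sigma,\alpha)$ with $B$ finite, $\sigma,\alpha\in\mathrm{Sym}(B)$, $\alpha$ a fixed-point-free involution, and $\langle\sigma,\alpha\rangle$ transitive on $B$; permutations compose as functions. Edges are the cycles of $\alpha$, vertices the cycles of $\sigma$. The underlying graph $G(\mathcal M)$ has vertices the cycles of $\sigma$ and edges the cycles of $\alpha$, $e$ incident to $v$ iff $e\cap v\neq\emptyset$. The dual map is $\mathcal M^\ast=(B,\sigma\alpha,\alpha)$. A bridge of $\mathcal M$ is an edge $e$ with $G(\mathcal M)-e$ disconnected; a separating loop is an edge $e$ with $G(\mathcal M^\ast)-e$ disconnected. For $\mu\in\mathrm{Sym}(B)$ and $B'\subseteq B$, $\mu_{|B'}\in\mathrm{Sym}(B')$ is defined by $\mu_{|B'}(b)=\mu^k(b)$, $k$ least positive with $\mu^k(b)\in B'$. For an edge $e$ that is not a bridge, deletion is $\mathcal M\setminus e=(B\setminus e,\sigma_{|B\setminus e},\alpha_{|B\setminus e})$; for an edge $e$ that is not a separating loop, contraction is $\mathcal M/e=(B\setminus e,(\sigma\alpha)_{|B\setminus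 e}\,\alpha_{|B\setminus e},\alpha_{|B\setminus e})$. *)

theory Defs
  imports "HOL-Combinatorics.Permutations"
begin

type_synonym 'a cmap = "'a set \<times> ('a \<Rightarrow> 'a) \<times> ('a \<Rightarrow> 'a)"

definition darts :: "'a cmap \<Rightarrow> 'a set" where "darts M = fst M"
definition vperm :: "'a cmap \<Rightarrow> ('a \<Rightarrow> 'a)" where "vperm M = fst (snd M)"
definition eperm :: "'a cmap \<Rightarrow> ('a \<Rightarrow> 'a)" where "eperm M = snd (snd M)"

text \<open>Transitivity of the group generated by sigma and alpha on B: any two darts
  are related by the equivalence closure of the one-step relations.\<close>
definition gen_step :: "('a \<Rightarrow> 'a) \<Rightarrow> ('a \<Rightarrow> 'a) \<Rightarrow> ('a \<times> 'a) set" where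
  "gen_step s a = {(b, s b) | b. True} \<union> {(s b, b) | b. True}
                 \<union> {(b, a b) | b. True} \<union> {(a b, b) | b. True}"

definition is_map :: "'a cmap \<Rightarrow> bool" where
  "is_map M \<longleftrightarrow> (let B = darts M; s = vperm M; a = eperm M in
     finite B \<and> s permutes B \<and> a permutes B \<and>
     (\<forall>b\<in>B. a b \<noteq> b \<and> a (a b) = b) \<and>
     (\<forall>x\<in>B. \<forall>y\<in>B. (x, y) \<in> (gen_step s a)\<^sup>*))"

definition perm_orbit :: "('a \<Rightarrow> 'a) \<Rightarrow> 'a \<Rightarrow> 'a set" where
  "perm_orbit p b = {(p ^^ n) b | n. True}"

definition edges :: "'a cmap \<Rightarrow> 'a set set" where
  "edges M = {perm_orbit (eperm M) b | b. b \<in> darts M}"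

definition vertices :: "'a cmap \<Rightarrow> 'a set set" where
  "vertices M = {perm_orbit (vperm M) b | b. b \<in> darts M}"

text \<open>Connectivity of the underlying graph G(M) with edge e removed
  (vertices kept; incidence = nonempty intersection).\<close>
definition adj_without :: "'a cmap \<Rightarrow> 'a set \<Rightarrow> ('a set \<times> 'a set) set" where
  "adj_without M e = {(v, w). v \<in> vertices M \<and> w \<in> vertices M \<and>
      (\<exists>e'\<in>edges M - {e}. e' \<inter> v \<noteq> {} \<and> e' \<inter> w \<noteq> {})}"

definition connected_without :: "'a cmap \<Rightarrow> 'a set \<Rightarrow> bool" where
  "connected_without M e \<longleftrightarrow>
     (\<forall>v\<in>vertices M. \<forall>w\<in>vertices M. (v, w) \<in> (adj_without M e)\<^sup>*)"

definition is_bridge :: "'a cmap \<Rightarrow> 'a set \<Rightarrow> bool" where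
  "is_bridge M e \<longleftrightarrow> e \<in> edges M \<and> \<not> connected_without M e"

definition dual :: "'a cmap \<Rightarrow> 'a cmap" where
  "dual M = (darts M, vperm M \<circ> eperm M, eperm M)"

definition is_sep_loop :: "'a cmap \<Rightarrow> 'a set \<Rightarrow> bool" where
  "is_sep_loop M e \<longleftrightarrow> is_bridge (dual M) e"

definition restr :: "('a \<Rightarrow> 'a) \<Rightarrow> 'a set \<Rightarrow> ('a \<Rightarrow> 'a)" where
  "restr \<mu> B' = (\<lambda>b. if b \<in> B' then (\<mu> ^^ (LEAST k. 0 < k \<and> (\<mu> ^^ k) b \<in> B')) b else b)"

definition delete :: "'a cmap \<Rightarrow> 'a set \<Rightarrow> 'a cmap" where
  "delete M e = (darts M - e, restr (vperm M) (darts M - e), restr (eperm M) (darts M - e))"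

definition contract :: "'a cmap \<Rightarrow> 'a set \<Rightarrow> 'a cmap" where
  "contract M e = (darts M - e,
      restr (vperm M \<circ> eperm M) (darts M - e) \<circ> restr (eperm M) (darts M - e),
      restr (eperm M) (darts M - e))"

end

theory Submission
  imports Defs "HOL-Combinatorics.Cycles"
begin


definition fst_in :: "('a \<Rightarrow> 'a) \<Rightarrow> 'a set \<Rightarrow> 'a \<Rightarrow> 'a" where
  "fst_in \<mu> S y = (\<mu> ^^ (LEAST k. (\<mu> ^^ k) y \<in> S)) y"

lemma fst_in_char:
  assumes "(\<mu>^^k) y \<in> S" "\<And>j. j<k \<Longrightarrow> (\<mu>^^j) y \<notin> S"
  shows "fst_in \<mu> S y = (\<mu>^^k) y"
proof -
  have "(LEAST k. (\<mu> ^^ k) y \<in> S) = k"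
    by (rule Least_equality) (use assms not_less in auto)
  thus ?thesis unfolding fst_in_def by simp
qed

lemma fst_in_ex:
  assumes "(\<mu>^^k) y \<in> S"
  shows "\<exists>m\<le>k. fst_in \<mu> S y = (\<mu>^^m) y \<and> (\<mu>^^m) y \<in> S \<and> (\<forall>j<m. (\<mu>^^j) y \<notin> S)"
proof -
  let ?m = "LEAST k. (\<mu> ^^ k) y \<in> S"
  have "(\<mu>^^?m) y \<in> S" by (rule LeastI[of _ k]) (rule assms)
  moreover have "?m \<le> k" by (rule Least_le) (rule assms)
  moreover have "\<forall>j<?m. (\<mu>^^j) y \<notin> S" using not_less_Least by blast
  ultimately show ?thesis unfolding fst_in_def by blast
qed

lemma fst_in_in: "y \<in> S \<Longrightarrow> fst_in \<mu> S y = y"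
  using fst_in_char[where k=0 and y=y and S=S and \<mu>=\<mu>] by simp

lemma fst_in_mem: "(\<mu>^^k) y \<in> S \<Longrightarrow> fst_in \<mu> S y \<in> S"
  using fst_in_ex by metis

lemma fst_in_step:
  assumes "y \<notin> S" "(\<mu>^^k) y \<in> S"
  shows "fst_in \<mu> S y = fst_in \<mu> S (\<mu> y)"
proof -
  obtain m where m: "fst_in \<mu> S y = (\<mu>^^m) y" "(\<mu>^^m) y \<in> S" "\<forall>j<m. (\<mu>^^j) y \<notin> S"
    using fst_in_ex[OF assms(2)] by blast
  have "m > 0" using m assms(1) by (cases m) auto
  then obtain m' where m': "m = Suc m'" by (cases m) auto
  have e: "(\<mu>^^j) (\<mu> y) = (\<mu>^^Suc j) y" for j by (metis funpow_Suc_right comp_apply)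
  have "fst_in \<mu> S (\<mu> y) = (\<mu>^^m') (\<mu> y)"
    by (rule fst_in_char) (use m m' e in auto)
  thus ?thesis using m m' e by simp
qed

lemma fst_in_iter:
  assumes "\<And>j. j < n \<Longrightarrow> (\<mu>^^j) y \<notin> S" "(\<mu>^^k) y \<in> S"
  shows "fst_in \<mu> S ((\<mu>^^n) y) = fst_in \<mu> S y"
  using assms
proof (induction n arbitrary: y k)
  case 0 then show ?case by simp
next
  case (Suc n)
  have "y \<notin> S" using Suc.prems(1)[of 0] by simp
  then have k: "k > 0" using Suc.prems(2) by (cases k) auto
  have e: "(\<mu>^^j) (\<mu> y) = (\<mu>^^Suc j) y" for j by (metis funpow_Suc_right comp_apply)
  have a1: "(\<mu>^^j) (\<mu> y) \<notin> S" if "j < n" for j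
    using Suc.prems(1)[of "Suc j"] that e[of j] by simp
  have a2: "(\<mu>^^(k-1)) (\<mu> y) \<in> S" using e[of "k-1"] k Suc.prems(2) by simp
  have "fst_in \<mu> S ((\<mu>^^n) (\<mu> y)) = fst_in \<mu> S (\<mu> y)"
    by (rule Suc.IH[of _ "k - 1"]) (use a1 a2 in auto)
  moreover have "fst_in \<mu> S y = fst_in \<mu> S (\<mu> y)"
    by (rule fst_in_step[OF \<open>y \<notin> S\<close> Suc.prems(2)])
  ultimately show ?case using e[of n] by simp
qed

lemma restr_out: "x \<notin> S \<Longrightarrow> restr \<mu> S x = x"
  by (simp add: restr_def)

lemma restr_char:
  assumes "x \<in> S" "0<k" "(\<mu>^^k) x \<in> S" "\<And>j. 0<j \<Longrightarrow> j<k \<Longrightarrow> (\<mu>^^j) x \<notin> S"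
  shows "restr \<mu> S x = (\<mu>^^k) x"
proof -
  have "(LEAST k. 0 < k \<and> (\<mu> ^^ k) x \<in> S) = k"
    by (rule Least_equality) (use assms not_less in auto)
  thus ?thesis unfolding restr_def using assms by simp
qed

lemma restr_ex:
  assumes "x \<in> S" "0<k" "(\<mu>^^k) x \<in> S"
  shows "\<exists>m. 0<m \<and> m \<le> k \<and> restr \<mu> S x = (\<mu>^^m) x \<and> (\<mu>^^m) x \<in> S \<and> (\<forall>j. 0<j \<longrightarrow> j<m \<longrightarrow> (\<mu>^^j) x \<notin> S)"
proof -
  let ?m = "LEAST k. 0 < k \<and> (\<mu> ^^ k) x \<in> S"
  have "0 < ?m \<and> (\<mu>^^?m) x \<in> S" by (rule LeastI[of _ k]) (use assms in auto)
  moreover have "?m \<le> k" by (rule Least_le) (use assms in auto)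
  moreover have "\<forall>j. 0<j \<longrightarrow> j<?m \<longrightarrow> (\<mu>^^j) x \<notin> S" using not_less_Least by blast
  ultimately show ?thesis unfolding restr_def using assms(1) by auto
qed

lemma restr_fst:
  assumes "x \<in> S" "0<k" "(\<mu>^^k) x \<in> S"
  shows "restr \<mu> S x = fst_in \<mu> S (\<mu> x)"
proof -
  obtain m where m: "0<m" "restr \<mu> S x = (\<mu>^^m) x" "(\<mu>^^m) x \<in> S"
     "\<forall>j. 0<j \<longrightarrow> j<m \<longrightarrow> (\<mu>^^j) x \<notin> S"
    using restr_ex[OF assms] by blast
  then obtain m' where m': "m = Suc m'" by (cases m) auto
  have e: "(\<mu>^^j) (\<mu> x) = (\<mu>^^Suc j) x" for j by (metis funpow_Suc_right comp_apply)
  have "fst_in \<mu> S (\<mu> x) = (\<mu>^^m') (\<mu> x)"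
    by (rule fst_in_char) (use m m' e in auto)
  thus ?thesis using m m' e by simp
qed

lemma perm_period:
  assumes "finite B" "p permutes B"
  obtains n where "n > 0" "p ^^ n = id"
  using permutation_is_nilpotent[OF permutes_imp_permutation[OF assms]] by metis

lemma perm_ret:
  assumes "finite B" "p permutes B"
  obtains n where "n > 0" "(p ^^ n) x = x"
  using perm_period[OF assms] by (metis id_apply)

lemma perm_restr_ex:
  assumes "finite B" "p permutes B" "x \<in> S"
  shows "\<exists>k>0. (p^^k) x \<in> S"
  using perm_ret[OF assms(1,2), of x] assms(3) by metis

lemma funpow_swap: "(\<mu>^^j) (\<mu> y) = (\<mu>^^Suc j) y"
  by (metis funpow_Suc_right comp_apply)

lemma restr_agree:
  assumes "x \<in> S" "y \<in> S" "\<And>z. z \<notin> S \<Longrightarrow> \<mu> z = \<nu> z" "\<mu> y = \<nu> x" "0<k" "(\<nu>^^k) x \<in> S"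
  shows "restr \<mu> S y = restr \<nu> S x"
proof -
  obtain m where m: "0<m" "restr \<nu> S x = (\<nu>^^m) x" "(\<nu>^^m) x \<in> S"
     "\<forall>j. 0<j \<longrightarrow> j<m \<longrightarrow> (\<nu>^^j) x \<notin> S"
    using restr_ex[OF assms(1,5,6)] by blast
  have eq: "0<j \<longrightarrow> j \<le> m \<longrightarrow> (\<mu>^^j) y = (\<nu>^^j) x" for j
  proof (induction j)
    case 0 then show ?case by simp
  next
    case (Suc j)
    show ?case
    proof (cases "j = 0")
      case True then show ?thesis using assms(4) by simp
    next
      case False
      show ?thesis
      proof (intro impI)
        assume "Suc j \<le> m"
        then have "(\<mu>^^j) y = (\<nu>^^j) x" "(\<nu>^^j) x \<notin> S" using Suc False m(4) by auto
        then show "(\<mu>^^Suc j) y = (\<nu>^^Suc j) x" using assms(3) by simp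
      qed
    qed
  qed
  have "restr \<mu> S y = (\<mu>^^m) y"
    by (rule restr_char) (use assms(2) m eq in auto)
  then show ?thesis using eq m by simp
qed

lemma restr_inj_aux:
  assumes "inj \<mu>" "x \<in> S" "x' \<in> S" "0<m" "m \<le> m'" "(\<mu>^^m) x = (\<mu>^^m') x'"
    "\<forall>j. 0<j \<longrightarrow> j<m' \<longrightarrow> (\<mu>^^j) x' \<notin> S"
  shows "x = x'"
proof -
  have mm: "m' = m + (m'-m)" using assms(5) by simp
  have "(\<mu>^^(m + (m'-m))) x' = (\<mu>^^m) ((\<mu>^^(m'-m)) x')" by (simp add: funpow_add)
  then have "(\<mu>^^m) x = (\<mu>^^m) ((\<mu>^^(m'-m)) x')"
    using assms(6) mm by simp
  then have "x = (\<mu>^^(m'-m)) x'" using inj_fn[OF assms(1), of m] by (meson injD)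
  moreover have "\<not> (0 < m' - m)"
  proof
    assume "0 < m' - m"
    then have "(\<mu>^^(m'-m)) x' \<notin> S" using assms(4,7) by auto
    then show False using \<open>x = _\<close> assms(2) by simp
  qed
  ultimately show ?thesis by simp
qed

lemma restr_permutes:
  assumes "finite B" "\<mu> permutes B" "S \<subseteq> B"
  shows "restr \<mu> S permutes S"
proof (rule inj_imp_permutes)
  show "finite S" using assms finite_subset by blast
  have ex: "\<exists>m. 0<m \<and> restr \<mu> S x = (\<mu>^^m) x \<and> (\<mu>^^m) x \<in> S \<and> (\<forall>j. 0<j \<longrightarrow> j<m \<longrightarrow> (\<mu>^^j) x \<notin> S)"
    if "x \<in> S" for x
    using perm_restr_ex[OF assms(1,2) that] restr_ex[OF that] by blast
  show "restr \<mu> S x \<in> S" if "x \<in> S" for x using ex[OF that] by auto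
  show "restr \<mu> S x = x" if "x \<notin> S" for x using that by (rule restr_out)
  have inj: "inj \<mu>" using assms(2) permutes_inj by blast
  show "inj_on (restr \<mu> S) S"
  proof (rule inj_onI)
    fix x x' assume xs: "x \<in> S" "x' \<in> S" "restr \<mu> S x = restr \<mu> S x'"
    obtain m where m: "0<m" "restr \<mu> S x = (\<mu>^^m) x" "\<forall>j. 0<j \<longrightarrow> j<m \<longrightarrow> (\<mu>^^j) x \<notin> S"
      using ex[OF xs(1)] by blast
    obtain m' where m': "0<m'" "restr \<mu> S x' = (\<mu>^^m') x'" "\<forall>j. 0<j \<longrightarrow> j<m' \<longrightarrow> (\<mu>^^j) x' \<notin> S"
      using ex[OF xs(2)] by blast
    show "x = x'"
    proof (cases "m \<le> m'")
      case True then show ?thesis using restr_inj_aux[OF inj xs(1,2) m(1) True] m m' xs(3) by simp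
    next
      case False
      then have "m' \<le> m" by simp
      then show ?thesis using restr_inj_aux[OF inj xs(2,1) m'(1) \<open>m' \<le> m\<close>] m m' xs(3) by simp
    qed
  qed
qed

lemma perm_back:
  assumes "finite B" "\<mu> permutes B"
  shows "\<exists>n. (\<mu>^^n) ((\<mu>^^m) x) = x"
proof -
  obtain N where N: "N>0" "\<mu>^^N = id" using perm_period[OF assms] by metis
  have le: "m \<le> N*m" using N(1) by simp
  have "(\<mu>^^(N*m - m)) ((\<mu>^^m) x) = (\<mu>^^(N*m - m + m)) x" by (simp add: funpow_add)
  also have "N*m - m + m = N*m" using le by simp
  also have "\<mu>^^(N*m) = (\<mu>^^N)^^m" by (simp add: funpow_mult)
  finally show ?thesis using N(2) by auto
qed

lemma restr_nested:
  assumes "finite B" "\<mu> permutes B" "B1 \<subseteq> B" "B2 \<subseteq> B1" "x \<in> B2"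
  shows "restr (restr \<mu> B1) B2 x = restr \<mu> B2 x"
proof -
  define \<nu> where "\<nu> = restr \<mu> B1"
  have \<nu>p: "\<nu> permutes B1" unfolding \<nu>_def by (rule restr_permutes[OF assms(1-3)])
  have finB1: "finite B1" using assms finite_subset by blast
  have G: "\<forall>y k. y \<in> B1 \<longrightarrow> (\<mu>^^n) y \<in> B2 \<longrightarrow> (\<nu>^^k) y \<in> B2 \<longrightarrow> fst_in \<nu> B2 y = fst_in \<mu> B2 y" for n
  proof (induction n rule: less_induct)
    case (less n)
    show ?case
    proof (intro allI impI)
      fix y k assume y: "y \<in> B1" "(\<mu>^^n) y \<in> B2" "(\<nu>^^k) y \<in> B2"
      show "fst_in \<nu> B2 y = fst_in \<mu> B2 y"
      proof (cases "y \<in> B2")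
        case True then show ?thesis by (simp add: fst_in_in)
      next
        case False
        have n0: "n > 0" using False y(2) by (cases n) auto
        have k0: "k > 0" using False y(3) by (cases k) auto
        have h1: "fst_in \<nu> B2 y = fst_in \<nu> B2 (\<nu> y)" by (rule fst_in_step[OF False y(3)])
        have "(\<mu>^^n) y \<in> B1" using y(2) assms(4) by auto
        then have h2: "\<nu> y = fst_in \<mu> B1 (\<mu> y)" unfolding \<nu>_def by (rule restr_fst[OF y(1) n0])
        have h3: "(\<mu>^^(n-1)) (\<mu> y) \<in> B1" using \<open>(\<mu>^^n) y \<in> B1\<close> n0 funpow_swap[where \<mu>=\<mu> and j="n-1" and y=y] by simp
        obtain m where m: "m \<le> n-1" "fst_in \<mu> B1 (\<mu> y) = (\<mu>^^m) (\<mu> y)" "\<forall>j<m. (\<mu>^^j) (\<mu> y) \<notin> B1"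
          using fst_in_ex[OF h3] by blast
        have nuy: "\<nu> y = (\<mu>^^Suc m) y" using h2 m(2) funpow_swap[where \<mu>=\<mu> and j=m and y=y] by simp
        have "(\<mu>^^(n - 1 - m)) (\<nu> y) = (\<mu>^^(n - 1 - m + Suc m)) y"
          by (simp only: nuy funpow_add comp_apply)
        also have "n - 1 - m + Suc m = n" using m(1) n0 by simp
        finally have "(\<mu>^^(n - 1 - m)) (\<nu> y) = (\<mu>^^n) y" .
        then have a1: "(\<mu>^^(n - 1 - m)) (\<nu> y) \<in> B2" using y(2) by simp
        have a2: "(\<nu>^^(k-1)) (\<nu> y) \<in> B2" using y(3) k0 funpow_swap[where \<mu>=\<nu> and j="k-1" and y=y] by simp
        have "\<nu> y \<in> B1" using permutes_in_image[OF \<nu>p] y(1) by simp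
        have lt: "n-1-m < n" using n0 by simp
        have IH: "fst_in \<nu> B2 (\<nu> y) = fst_in \<mu> B2 (\<nu> y)"
          using less.IH[OF lt, rule_format, OF \<open>\<nu> y \<in> B1\<close> a1 a2] .
        have b1: "fst_in \<mu> B2 y = fst_in \<mu> B2 (\<mu> y)"
          by (rule fst_in_step[OF False y(2)])
        have "(\<mu>^^(n-1)) (\<mu> y) \<in> B2" using y(2) n0 funpow_swap[where \<mu>=\<mu> and j="n-1" and y=y] by simp
        then have b2: "fst_in \<mu> B2 ((\<mu>^^m) (\<mu> y)) = fst_in \<mu> B2 (\<mu> y)"
          by (intro fst_in_iter) (use m(3) assms(4) in auto)
        show ?thesis using h1 IH b1 b2 m(2) h2 by simp
      qed
    qed
  qed
  have xB1: "x \<in> B1" using assms by auto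
  obtain N where N: "N > 0" "(\<nu>^^N) x = x" using perm_ret[OF finB1 \<nu>p] by metis
  have r1: "restr \<nu> B2 x = fst_in \<nu> B2 (\<nu> x)"
    by (rule restr_fst[OF assms(5) N(1)]) (use N assms(5) in simp)
  have e1: "(\<nu>^^(N-1)) (\<nu> x) \<in> B2" using N assms(5) funpow_swap[where \<mu>=\<nu> and j="N-1" and y=x] by simp
  obtain k0 where k0: "k0 > 0" "(\<mu>^^k0) x \<in> B1" using perm_restr_ex[OF assms(1,2) xB1] by blast
  obtain m where m: "\<nu> x = (\<mu>^^m) x" using restr_ex[OF xB1 k0] unfolding \<nu>_def by blast
  obtain n where n: "(\<mu>^^n) ((\<mu>^^m) x) = x" using perm_back[OF assms(1,2)] by metis
  have nxB1: "\<nu> x \<in> B1" using permutes_in_image[OF \<nu>p] xB1 by simp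
  have nB2: "(\<mu>^^n) (\<nu> x) \<in> B2" using m n assms(5) by simp
  have r2: "fst_in \<nu> B2 (\<nu> x) = fst_in \<mu> B2 (\<nu> x)"
    using G[of n, rule_format, OF nxB1 nB2 e1] .
  obtain M where M: "M > 0" "(\<mu>^^M) x = x" using perm_ret[OF assms(1,2)] by metis
  have hit: "(\<mu>^^(M-1)) (\<mu> x) \<in> B2" using M assms(5) funpow_swap[where \<mu>=\<mu> and j="M-1" and y=x] by simp
  have h2: "\<nu> x = fst_in \<mu> B1 (\<mu> x)" unfolding \<nu>_def
    by (rule restr_fst[OF xB1 M(1)]) (use M xB1 in simp)
  have h4: "(\<mu>^^(M-1)) (\<mu> x) \<in> B1" using hit assms(4) by auto
  obtain m' where m': "fst_in \<mu> B1 (\<mu> x) = (\<mu>^^m') (\<mu> x)" "\<forall>j<m'. (\<mu>^^j) (\<mu> x) \<notin> B1"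
    using fst_in_ex[OF h4] by blast
  have r3: "fst_in \<mu> B2 ((\<mu>^^m') (\<mu> x)) = fst_in \<mu> B2 (\<mu> x)"
    by (intro fst_in_iter[OF _ hit]) (use m'(2) assms(4) in auto)
  have r4: "restr \<mu> B2 x = fst_in \<mu> B2 (\<mu> x)"
    by (rule restr_fst[OF assms(5) M(1)]) (use M assms(5) in simp)
  have "restr (restr \<mu> B1) B2 x = restr \<nu> B2 x" unfolding \<nu>_def ..
  then show ?thesis using r1 r2 r3 r4 h2 m'(1) by simp
qed

lemma orbit_step:
  assumes "finite B" "p permutes B"
  shows "perm_orbit p (p x) = perm_orbit p x"
proof -
  obtain N where N: "N>0" "p^^N = id" using perm_period[OF assms] by metis
  have "(p^^n) x = (p^^(n + N - 1)) (p x)" for n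
  proof -
    have "(p^^(n + N - 1)) (p x) = (p^^(n+N)) x" using N(1) funpow_swap[where \<mu>=p and j="n+N-1" and y=x] by simp
    also have "\<dots> = (p^^n) x" using N(2) by (simp add: funpow_add)
    finally show ?thesis by simp
  qed
  then have "perm_orbit p x \<subseteq> perm_orbit p (p x)" unfolding perm_orbit_def by blast
  moreover have "perm_orbit p (p x) \<subseteq> perm_orbit p x"
  proof
    fix y assume "y \<in> perm_orbit p (p x)"
    then obtain n where "y = (p^^n) (p x)" unfolding perm_orbit_def by blast
    then have "y = (p^^Suc n) x" using funpow_swap[where \<mu>=p and j=n and y=x] by simp
    then show "y \<in> perm_orbit p x" unfolding perm_orbit_def by blast
  qed
  ultimately show ?thesis by blast
qed

lemma orbit_invol:
  assumes "a (a b) = b"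
  shows "perm_orbit a b = {b, a b}"
proof -
  have "(a^^n) b \<in> {b, a b}" for n
    by (induction n) (use assms in auto)
  moreover have "b = (a^^0) b" "a b = (a^^1) b" by auto
  ultimately show ?thesis unfolding perm_orbit_def by blast
qed




definition dstep :: "'a cmap \<Rightarrow> 'a set \<Rightarrow> ('a \<times> 'a) set" where
  "dstep N g = {(x, y). (x \<in> darts N \<and> y = vperm N x) \<or> (y \<in> darts N \<and> x = vperm N y)
     \<or> (x \<in> darts N \<and> x \<notin> g \<and> y = eperm N x) \<or> (y \<in> darts N \<and> y \<notin> g \<and> x = eperm N y)}"

lemma dstep_iff: "(x, y) \<in> dstep N g \<longleftrightarrow> (x \<in> darts N \<and> y = vperm N x) \<or> (y \<in> darts N \<and> x = vperm N y)
     \<or> (x \<in> darts N \<and> x \<notin> g \<and> y = eperm N x) \<or> (y \<in> darts N \<and> y \<notin> g \<and> x = eperm N y)"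
  unfolding dstep_def by simp

lemma dstep_sym: "sym (dstep N g)"
  unfolding sym_def dstep_iff by auto

lemma dstep_rsym: "(x,y) \<in> (dstep N g)\<^sup>* \<Longrightarrow> (y,x) \<in> (dstep N g)\<^sup>*"
  by (rule symD[OF sym_rtrancl[OF dstep_sym]])

lemma rsym_gen: "sym r \<Longrightarrow> (x,y) \<in> r\<^sup>* \<Longrightarrow> (y,x) \<in> r\<^sup>*"
  by (rule symD[OF sym_rtrancl])

lemma orbit_mem0: "b \<in> perm_orbit p b"
  unfolding perm_orbit_def by (simp, rule exI[of _ 0], simp)

lemma orbit_mem1: "p b \<in> perm_orbit p b"
  unfolding perm_orbit_def by (simp, rule exI[of _ 1], simp)

lemma orbit_reach:
  assumes "\<forall>x\<in>darts N. vperm N x \<in> darts N" "b \<in> darts N"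
  shows "(vperm N ^^ n) b \<in> darts N \<and> (b, (vperm N ^^ n) b) \<in> (dstep N g)\<^sup>*"
proof (induction n)
  case 0 then show ?case using assms by simp
next
  case (Suc n)
  then have "((vperm N ^^ n) b, (vperm N ^^ Suc n) b) \<in> dstep N g"
    unfolding dstep_iff using Suc by simp
  moreover have "(vperm N ^^ n) b \<in> darts N" "(b, (vperm N ^^ n) b) \<in> (dstep N g)\<^sup>*" using Suc by auto
  ultimately show ?case using assms(1) by (auto intro: rtrancl_into_rtrancl)
qed

lemma DC1:
  assumes s: "\<forall>x\<in>darts N. vperm N x \<in> darts N"
    and a: "\<forall>x\<in>darts N. eperm N x \<in> darts N \<and> eperm N (eperm N x) = x"
    and g: "g = {b0, eperm N b0}" "b0 \<in> darts N"
    and c: "connected_without N g"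
    and xy: "x \<in> darts N" "y \<in> darts N"
  shows "(x, y) \<in> (dstep N g)\<^sup>*"
proof -
  have vert: "\<forall>x\<in>v. \<forall>y\<in>v. (x,y) \<in> (dstep N g)\<^sup>*" if vv: "v \<in> vertices N" for v
  proof -
    obtain b where b: "b \<in> darts N" "v = perm_orbit (vperm N) b"
      using vv unfolding vertices_def by blast
    show ?thesis
    proof (intro ballI)
      fix x y assume "x \<in> v" "y \<in> v"
      then obtain i j where "x = (vperm N ^^ i) b" "y = (vperm N ^^ j) b"
        using b unfolding perm_orbit_def by blast
      then have "(b, x) \<in> (dstep N g)\<^sup>*" "(b, y) \<in> (dstep N g)\<^sup>*"
        using orbit_reach[OF s b(1)] by auto
      then show "(x,y) \<in> (dstep N g)\<^sup>*" using dstep_rsym[of b x] rtrancl_trans[of x b] by blast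
    qed
  qed
  have edge: "(z, z') \<in> (dstep N g)\<^sup>*" if ee: "e' \<in> edges N - {g}" "z \<in> e'" "z' \<in> e'" for e' z z'
  proof -
    obtain b where b: "b \<in> darts N" "e' = perm_orbit (eperm N) b"
      using ee(1) unfolding edges_def by blast
    have "eperm N (eperm N b) = b" using a b(1) by blast
    then have e': "e' = {b, eperm N b}" using b(2) orbit_invol[of "eperm N" b] by simp
    have zB: "z \<in> darts N" using e' b a ee(2) by auto
    have ez: "e' = {z, eperm N z}" using e' ee(2) a b(1) by auto
    have "z \<notin> g"
    proof
      assume "z \<in> g"
      then have "g = {z, eperm N z}" using g a by auto
      then show False using ez ee(1) by auto
    qed
    then have st: "(z, eperm N z) \<in> dstep N g" using zB unfolding dstep_iff by simp
    show ?thesis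
    proof (cases "z' = z")
      case True then show ?thesis by simp
    next
      case False then have "z' = eperm N z" using ez ee(3) by auto
      then show ?thesis using st by auto
    qed
  qed
  have P: "(v, w) \<in> (adj_without N g)\<^sup>* \<Longrightarrow> v \<in> vertices N \<Longrightarrow> \<forall>x\<in>v. \<forall>y\<in>w. (x,y) \<in> (dstep N g)\<^sup>*" for v w
  proof (induction rule: rtrancl_induct)
    case base then show ?case using vert by blast
  next
    case (step u w)
    from step.hyps(2) obtain e' where u: "u \<in> vertices N" "w \<in> vertices N" "e' \<in> edges N - {g}"
       "e' \<inter> u \<noteq> {}" "e' \<inter> w \<noteq> {}"
      unfolding adj_without_def by blast
    obtain z z' where z: "z \<in> e' \<inter> u" "z' \<in> e' \<inter> w" using u by blast
    show ?case
    proof (intro ballI)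
      fix x y assume xy: "x \<in> v" "y \<in> w"
      have "(x, z) \<in> (dstep N g)\<^sup>*" using step.IH step.prems xy z by blast
      moreover have "(z, z') \<in> (dstep N g)\<^sup>*" using edge[OF u(3)] z by blast
      moreover have "(z', y) \<in> (dstep N g)\<^sup>*" using vert[OF u(2)] z xy by blast
      ultimately show "(x,y) \<in> (dstep N g)\<^sup>*" by (meson rtrancl_trans)
    qed
  qed
  have vx: "perm_orbit (vperm N) x \<in> vertices N" "x \<in> perm_orbit (vperm N) x"
    using xy orbit_mem0[of x "vperm N"] unfolding vertices_def by auto
  have vy: "perm_orbit (vperm N) y \<in> vertices N" "y \<in> perm_orbit (vperm N) y"
    using xy orbit_mem0[of y "vperm N"] unfolding vertices_def by auto
  have "(perm_orbit (vperm N) x, perm_orbit (vperm N) y) \<in> (adj_without N g)\<^sup>*"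
    using c vx vy unfolding connected_without_def by blast
  then show ?thesis using P vx vy by blast
qed

lemma DC2:
  assumes fin: "finite (darts N)" and s: "vperm N permutes darts N"
    and a: "\<forall>x\<in>darts N. eperm N x \<in> darts N"
    and c: "\<forall>x\<in>darts N. \<forall>y\<in>darts N. (x, y) \<in> (dstep N g)\<^sup>*"
  shows "connected_without N g"
proof -
  let ?O = "perm_orbit (vperm N)"
  have sB: "vperm N x \<in> darts N" if "x \<in> darts N" for x using permutes_in_image[OF s] that by simp
  have adjs: "(?O x, ?O (eperm N x)) \<in> adj_without N g \<and> (?O (eperm N x), ?O x) \<in> adj_without N g"
    if "x \<in> darts N" "x \<notin> g" for x
  proof -
    let ?e = "perm_orbit (eperm N) x"
    have "?e \<in> edges N" using that unfolding edges_def by blast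
    moreover have "x \<in> ?e" "eperm N x \<in> ?e" by (rule orbit_mem0, rule orbit_mem1)
    moreover have "?e \<noteq> g" using \<open>x \<in> ?e\<close> that(2) by blast
    moreover have "x \<in> ?O x" "eperm N x \<in> ?O (eperm N x)" by (rule orbit_mem0)+
    moreover have "?O x \<in> vertices N" "?O (eperm N x) \<in> vertices N"
      using that a unfolding vertices_def by blast+
    ultimately show ?thesis unfolding adj_without_def by blast
  qed
  have P: "(x, y) \<in> (dstep N g)\<^sup>* \<Longrightarrow> x \<in> darts N \<Longrightarrow> y \<in> darts N \<and> (?O x, ?O y) \<in> (adj_without N g)\<^sup>*" for x y
  proof (induction rule: rtrancl_induct)
    case base then show ?case by simp
  next
    case (step y z)
    then have yB: "y \<in> darts N" and IH: "(?O x, ?O y) \<in> (adj_without N g)\<^sup>*" by auto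
    from step.hyps(2) consider (v1) "z = vperm N y" | (v2) "y = vperm N z" "z \<in> darts N"
      | (e1) "z = eperm N y" "y \<notin> g" | (e2) "y = eperm N z" "z \<in> darts N" "z \<notin> g"
      unfolding dstep_iff by blast
    then show ?case
    proof cases
      case v1 then show ?thesis using IH yB sB orbit_step[OF fin s, of y] by simp
    next
      case v2 then show ?thesis using IH orbit_step[OF fin s, of z] by simp
    next
      case e1 then show ?thesis using IH yB a adjs[OF yB e1(2)] by (meson rtrancl.rtrancl_into_rtrancl)
    next
      case e2 then show ?thesis using IH adjs[OF e2(2,3)] by (meson rtrancl.rtrancl_into_rtrancl)
    qed
  qed
  show ?thesis unfolding connected_without_def
  proof (intro ballI)
    fix v w assume "v \<in> vertices N" "w \<in> vertices N"
    then obtain b b' where "b \<in> darts N" "b' \<in> darts N" "v = ?O b" "w = ?O b'"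
      unfolding vertices_def by blast
    then show "(v, w) \<in> (adj_without N g)\<^sup>*" using P c by blast
  qed
qed




lemma delete_simps:
  "darts (delete N g) = darts N - g" "vperm (delete N g) = restr (vperm N) (darts N - g)"
  "eperm (delete N g) = restr (eperm N) (darts N - g)"
  by (simp_all add: delete_def darts_def vperm_def eperm_def)

lemma contract_simps:
  "darts (contract N g) = darts N - g"
  "vperm (contract N g) = restr (vperm N \<circ> eperm N) (darts N - g) \<circ> restr (eperm N) (darts N - g)"
  "eperm (contract N g) = restr (eperm N) (darts N - g)"
  by (simp_all add: contract_def darts_def vperm_def eperm_def)

lemma dual_simps:
  "darts (dual N) = darts N" "vperm (dual N) = vperm N \<circ> eperm N" "eperm (dual N) = eperm N"
  by (simp_all add: dual_def darts_def vperm_def eperm_def)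

lemma restr_one: "x \<in> S \<Longrightarrow> \<mu> x \<in> S \<Longrightarrow> restr \<mu> S x = \<mu> x"
  using restr_char[of x S 1 \<mu>] by simp

lemma invol_permutes:
  assumes "\<And>x. \<gamma> (\<gamma> x) = x" "\<And>x. x \<notin> B \<Longrightarrow> \<gamma> x = x" "\<And>x. x \<in> B \<Longrightarrow> \<gamma> x \<in> B" "finite B"
  shows "\<gamma> permutes B"
proof (rule inj_imp_permutes)
  show "inj_on \<gamma> B" by (metis assms(1) inj_onI)
qed (use assms in auto)

locale L6 =
  fixes M :: "'a cmap" and e f :: "'a set"
  assumes map: "is_map M" and eE: "e \<in> edges M" and fE: "f \<in> edges M" and ne: "e \<noteq> f"
    and nb: "\<not> is_bridge M e" and nsl: "\<not> is_sep_loop (delete M e) f"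
begin

abbreviation "B \<equiv> darts M"
abbreviation "\<sigma> \<equiv> vperm M"
abbreviation "\<alpha> \<equiv> eperm M"

lemma fin: "finite B" and sp: "\<sigma> permutes B" and ap: "\<alpha> permutes B"
  and inv1: "b \<in> B \<Longrightarrow> \<alpha> b \<noteq> b" and inv2: "b \<in> B \<Longrightarrow> \<alpha> (\<alpha> b) = b"
  and trans: "x \<in> B \<Longrightarrow> y \<in> B \<Longrightarrow> (x, y) \<in> (gen_step \<sigma> \<alpha>)\<^sup>*"
  using map unfolding is_map_def Let_def by auto

lemma aB: "x \<in> B \<Longrightarrow> \<alpha> x \<in> B" using permutes_in_image[OF ap] by simp
lemma sB: "x \<in> B \<Longrightarrow> \<sigma> x \<in> B" using permutes_in_image[OF sp] by simp
lemma aout: "x \<notin> B \<Longrightarrow> \<alpha> x = x" using permutes_not_in[OF ap] by simp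
lemma sout: "x \<notin> B \<Longrightarrow> \<sigma> x = x" using permutes_not_in[OF sp] by simp
lemma a2: "\<alpha> (\<alpha> x) = x" using inv2 aout by (cases "x \<in> B") auto

lemma edge_form: assumes "g \<in> edges M" shows "\<exists>a\<in>B. g = {a, \<alpha> a}"
proof -
  obtain a where "a \<in> B" "g = perm_orbit \<alpha> a" using assms unfolding edges_def by blast
  then show ?thesis using orbit_invol[of \<alpha> a] a2 by auto
qed

lemma e_cl: "x \<in> e \<Longrightarrow> \<alpha> x \<in> e" using edge_form[OF eE] a2 by auto
lemma f_cl: "x \<in> f \<Longrightarrow> \<alpha> x \<in> f" using edge_form[OF fE] a2 by auto
lemma eB: "x \<in> e \<Longrightarrow> x \<in> B" using edge_form[OF eE] aB by auto
lemma fB: "x \<in> f \<Longrightarrow> x \<in> B" using edge_form[OF fE] aB by auto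
lemma disj: "x \<in> e \<Longrightarrow> x \<notin> f"
proof
  assume "x \<in> e" "x \<in> f"
  obtain a where a: "e = {a, \<alpha> a}" using edge_form[OF eE] by blast
  obtain c where c: "f = {c, \<alpha> c}" using edge_form[OF fE] by blast
  have "e = {x, \<alpha> x}" using a \<open>x \<in> e\<close> a2 by auto
  moreover have "f = {x, \<alpha> x}" using c \<open>x \<in> f\<close> a2 by auto
  ultimately show False using ne by simp
qed

definition "rho = \<sigma> \<circ> (\<lambda>z. if z \<in> e then z else \<alpha> z)"
definition "rhof = \<sigma> \<circ> (\<lambda>z. if z \<in> f then \<alpha> z else z)"

lemma rho_e: "u \<in> e \<Longrightarrow> rho u = \<sigma> u" by (simp add: rho_def)
lemma rho_ne: "u \<notin> e \<Longrightarrow> rho u = \<sigma> (\<alpha> u)" by (simp add: rho_def)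
lemma rhof_f: "u \<in> f \<Longrightarrow> rhof u = \<sigma> (\<alpha> u)" by (simp add: rhof_def)
lemma rhof_nf: "u \<notin> f \<Longrightarrow> rhof u = \<sigma> u" by (simp add: rhof_def)

lemma rho_p: "rho permutes B"
proof -
  have "(\<lambda>z. if z \<in> e then z else \<alpha> z) permutes B"
  proof (rule invol_permutes)
    fix x show "(if (if x \<in> e then x else \<alpha> x) \<in> e then (if x \<in> e then x else \<alpha> x) else \<alpha> (if x \<in> e then x else \<alpha> x)) = x"
      using e_cl a2 by (metis)
  next
    fix x assume "x \<notin> B" then show "(if x \<in> e then x else \<alpha> x) = x" using eB aout by auto
  next
    fix x assume "x \<in> B" then show "(if x \<in> e then x else \<alpha> x) \<in> B" using aB by auto
  qed (rule fin)
  then show ?thesis unfolding rho_def using permutes_compose sp by blast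
qed

lemma rhof_p: "rhof permutes B"
proof -
  have "(\<lambda>z. if z \<in> f then \<alpha> z else z) permutes B"
  proof (rule invol_permutes)
    fix x show "(if (if x \<in> f then \<alpha> x else x) \<in> f then \<alpha> (if x \<in> f then \<alpha> x else x) else (if x \<in> f then \<alpha> x else x)) = x"
      using f_cl a2 by (metis)
  next
    fix x assume "x \<notin> B" then show "(if x \<in> f then \<alpha> x else x) = x" using fB by auto
  next
    fix x assume "x \<in> B" then show "(if x \<in> f then \<alpha> x else x) \<in> B" using aB by auto
  qed (rule fin)
  then show ?thesis unfolding rhof_def using permutes_compose sp by blast
qed

lemma Phi_e: "restr \<sigma> (B - e) (restr \<alpha> (B - e) x) = restr rho (B - e) x"
proof (cases "x \<in> B - e")
  case False then show ?thesis by (simp add: restr_out)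
next
  case True
  have ax: "\<alpha> x \<in> B - e" using True aB e_cl a2 by (metis Diff_iff)
  have ra: "restr \<alpha> (B - e) x = \<alpha> x" by (rule restr_one[where \<mu>=\<alpha>, OF True ax])
  obtain N where N: "N > 0" "(rho ^^ N) x = x" using perm_ret[OF fin rho_p] by metis
  have N2: "(rho ^^ N) x \<in> B - e" using N True by simp
  moreover have "restr \<sigma> (B - e) (\<alpha> x) = restr rho (B - e) x"
  proof (rule restr_agree[OF True ax _ _ N(1) N2])
    fix z assume "z \<notin> B - e"
    then show "\<sigma> z = rho z" using rho_e rho_ne aout by (cases "z \<in> e") auto
  next
    show "\<sigma> (\<alpha> x) = rho x" using True rho_ne by simp
  next
  qed
  ultimately show ?thesis using ra by simp
qed

lemma Psi_f: "restr (\<sigma> \<circ> \<alpha>) (B - f) (restr \<alpha> (B - f) x) = restr rhof (B - f) x"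
proof (cases "x \<in> B - f")
  case False then show ?thesis by (simp add: restr_out)
next
  case True
  have ax: "\<alpha> x \<in> B - f" using True aB f_cl a2 by (metis Diff_iff)
  have ra: "restr \<alpha> (B - f) x = \<alpha> x" by (rule restr_one[where \<mu>=\<alpha>, OF True ax])
  obtain N where N: "N > 0" "(rhof ^^ N) x = x" using perm_ret[OF fin rhof_p] by metis
  have N2: "(rhof ^^ N) x \<in> B - f" using N True by simp
  moreover have "restr (\<sigma> \<circ> \<alpha>) (B - f) (\<alpha> x) = restr rhof (B - f) x"
  proof (rule restr_agree[OF True ax _ _ N(1) N2])
    fix z assume "z \<notin> B - f"
    then show "(\<sigma> \<circ> \<alpha>) z = rhof z" using rhof_f rhof_nf aout by (cases "z \<in> f") auto
  next
    show "(\<sigma> \<circ> \<alpha>) (\<alpha> x) = rhof x" using True rhof_nf a2 by simp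
  next
  qed
  ultimately show ?thesis using ra by simp
qed


lemma B_e_cl: "x \<in> B - e \<Longrightarrow> \<alpha> x \<in> B - e" using aB e_cl a2 by (metis Diff_iff)
lemma B_f_cl: "x \<in> B - f \<Longrightarrow> \<alpha> x \<in> B - f" using aB f_cl a2 by (metis Diff_iff)

lemma ident: "contract (delete M e) f = delete (contract M f) e"
proof -
  let ?D = "B - e - f"
  have DD: "B - f - e = ?D" by blast
  have Dcl: "x \<in> ?D \<Longrightarrow> \<alpha> x \<in> ?D" for x using B_e_cl B_f_cl by blast
  have ep1: "restr (restr \<alpha> (B - e)) ?D x = restr (restr \<alpha> (B - f)) ?D x" for x
  proof (cases "x \<in> ?D")
    case True
    have x1: "x \<in> B - e" "x \<in> B - f" using True by auto
    have x2: "\<alpha> x \<in> B - e" "\<alpha> x \<in> B - f" using Dcl[OF True] by auto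
    have r1: "restr \<alpha> (B - e) x = \<alpha> x" by (rule restr_one[where \<mu>=\<alpha>, OF x1(1) x2(1)])
    have r2: "restr \<alpha> (B - f) x = \<alpha> x" by (rule restr_one[where \<mu>=\<alpha>, OF x1(2) x2(2)])
    have r3: "restr (restr \<alpha> (B - e)) ?D x = \<alpha> x"
      using restr_one[where \<mu>="restr \<alpha> (B - e)", OF True] r1 Dcl[OF True] by simp
    have r4: "restr (restr \<alpha> (B - f)) ?D x = \<alpha> x"
      using restr_one[where \<mu>="restr \<alpha> (B - f)", OF True] r2 Dcl[OF True] by simp
    show ?thesis using r3 r4 by simp
  qed (simp add: restr_out)
  have rhoD: "restr (restr rho (B - e)) ?D y = restr rho ?D y" if "y \<in> ?D" for y
    by (rule restr_nested[OF fin rho_p]) (use that in auto)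
  have rhofD: "restr (restr rhof (B - f)) ?D y = restr rhof ?D y" if "y \<in> ?D" for y
    by (rule restr_nested[OF fin rhof_p]) (use that in auto)
  have Phi: "restr \<sigma> (B - e) \<circ> restr \<alpha> (B - e) = restr rho (B - e)" by (rule ext) (simp add: Phi_e)
  have Psi: "restr (\<sigma> \<circ> \<alpha>) (B - f) \<circ> restr \<alpha> (B - f) = restr rhof (B - f)" by (rule ext) (simp add: Psi_f)
  have vp: "(restr (restr rho (B - e)) ?D \<circ> restr (restr \<alpha> (B - e)) ?D) x = restr (restr rhof (B - f)) ?D x" for x
  proof (cases "x \<in> ?D")
    case False then show ?thesis by (simp add: restr_out)
  next
    case True
    have ax: "\<alpha> x \<in> ?D" using Dcl[OF True] .
    have x1: "x \<in> B - e" "\<alpha> x \<in> B - e" using True ax by auto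
    have r1: "restr \<alpha> (B - e) x = \<alpha> x" by (rule restr_one[where \<mu>=\<alpha>, OF x1])
    have a1: "restr (restr \<alpha> (B - e)) ?D x = \<alpha> x"
      using restr_one[where \<mu>="restr \<alpha> (B - e)", OF True] r1 ax by simp
    obtain N where N: "N > 0" "(rhof ^^ N) x = x" using perm_ret[OF fin rhof_p] by metis
    have N2: "(rhof ^^ N) x \<in> ?D" using N True by simp
    have "restr rho ?D (\<alpha> x) = restr rhof ?D x"
    proof (rule restr_agree[OF True ax _ _ N(1) N2])
      fix z assume "z \<notin> ?D"
      show "rho z = rhof z"
      proof (cases "z \<in> e")
        case True then show ?thesis using rho_e rhof_nf disj by simp
      next
        case ne: False
        show ?thesis
        proof (cases "z \<in> f")
          case True then show ?thesis using rho_ne[OF ne] rhof_f by simp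
        next
          case False
          then have "z \<notin> B" using ne \<open>z \<notin> ?D\<close> by blast
          then show ?thesis using rho_ne[OF ne] rhof_nf[OF False] aout by simp
        qed
      qed
    next
      show "rho (\<alpha> x) = rhof x" using True ax rho_ne rhof_nf a2 by auto
    qed
    then show ?thesis using a1 rhoD[OF ax] rhofD[OF True] by simp
  qed
  have L: "contract (delete M e) f = (?D, restr (restr rho (B - e)) ?D \<circ> restr (restr \<alpha> (B - e)) ?D,
      restr (restr \<alpha> (B - e)) ?D)"
    by (simp only: contract_def delete_simps Phi)
  have R: "delete (contract M f) e = (B - f - e, restr (restr rhof (B - f)) (B - f - e),
      restr (restr \<alpha> (B - f)) (B - f - e))"
    by (simp only: delete_def contract_simps Psi)
  have "restr (restr rho (B - e)) ?D \<circ> restr (restr \<alpha> (B - e)) ?D = restr (restr rhof (B - f)) ?D"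
    by (rule ext) (rule vp)
  moreover have "restr (restr \<alpha> (B - e)) ?D = restr (restr \<alpha> (B - f)) ?D"
    by (rule ext) (rule ep1)
  ultimately show ?thesis unfolding L R DD by simp
qed

end



lemma map_rtrancl:
  assumes "\<And>u w. (u, w) \<in> r \<Longrightarrow> (h u, h w) \<in> s\<^sup>*" "(x, y) \<in> r\<^sup>*"
  shows "(h x, h y) \<in> s\<^sup>*"
  using assms(2)
proof (induction rule: rtrancl_induct)
  case base then show ?case by simp
next
  case (step y z) then show ?case using assms(1) rtrancl_trans by metis
qed

context L6 begin

abbreviation "Nb \<equiv> dual (delete M e)"
abbreviation "R1 \<equiv> dstep (dual M) f"

lemma Nb_darts: "darts Nb = B - e" by (simp add: dual_simps delete_simps)
lemma Nb_v: "vperm Nb x = restr rho (B - e) x" by (simp add: dual_simps delete_simps Phi_e)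
lemma Nb_e: "x \<in> B - e \<Longrightarrow> eperm Nb x = \<alpha> x"
  using restr_one[where \<mu>=\<alpha>, OF _ B_e_cl] by (simp add: dual_simps delete_simps)

lemma rho_ret: obtains N where "N > 0" "(rho ^^ N) x = x" using perm_ret[OF fin rho_p] by metis
lemma rhof_ret: obtains N where "N > 0" "(rhof ^^ N) x = x" using perm_ret[OF fin rhof_p] by metis

lemma rho_B: "x \<in> B \<Longrightarrow> rho x \<in> B" using permutes_in_image[OF rho_p] by simp
lemma rhof_B: "x \<in> B \<Longrightarrow> rhof x \<in> B" using permutes_in_image[OF rhof_p] by simp

lemma restr_rho_fst: "x \<in> B - e \<Longrightarrow> restr rho (B - e) x = fst_in rho (B - e) (rho x)"
proof -
  assume x: "x \<in> B - e"
  obtain N where N: "N > 0" "(rho ^^ N) x = x" by (rule rho_ret)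
  show ?thesis by (rule restr_fst[OF x N(1)]) (use N x in simp)
qed

lemma restr_rho_ex: "x \<in> B - e \<Longrightarrow> \<exists>n. (rho ^^ n) (rho x) \<in> B - e"
proof -
  assume x: "x \<in> B - e"
  obtain N where N: "N > 0" "(rho ^^ N) x = x" by (rule rho_ret)
  have "(rho ^^ (N - 1)) (rho x) = (rho ^^ N) x"
    using N(1) funpow_swap[where \<mu>=rho and j="N-1" and y=x] by simp
  then have "(rho ^^ (N - 1)) (rho x) \<in> B - e" using N x by simp
  then show ?thesis by blast
qed

lemma R1_v: "x \<in> B \<Longrightarrow> (x, \<sigma> (\<alpha> x)) \<in> R1" by (simp add: dstep_iff dual_simps)
lemma R1_a: "x \<in> B \<Longrightarrow> x \<notin> f \<Longrightarrow> (x, \<alpha> x) \<in> R1" by (simp add: dstep_iff dual_simps)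

lemma WK1: "(rho ^^ n) v \<in> B - e \<Longrightarrow> v \<in> B \<Longrightarrow> (v, fst_in rho (B - e) v) \<in> R1\<^sup>*"
proof (induction n arbitrary: v)
  case 0 then show ?case by (simp add: fst_in_in)
next
  case (Suc n)
  show ?case
  proof (cases "v \<in> e")
    case False then show ?thesis using Suc.prems by (simp add: fst_in_in)
  next
    case True
    have st: "fst_in rho (B - e) v = fst_in rho (B - e) (rho v)"
      using fst_in_step[where y=v and S="B - e" and \<mu>=rho and k="Suc n"] True Suc.prems(1) by simp
    have rv: "rho v = \<sigma> v" using rho_e[OF True] .
    have s1: "(v, \<alpha> v) \<in> R1" using R1_a Suc.prems(2) disj[OF True] by simp
    have s2: "(\<alpha> v, \<sigma> v) \<in> R1" using R1_v[of "\<alpha> v"] aB Suc.prems(2) a2 by simp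
    have "(rho ^^ n) (rho v) \<in> B - e" using Suc.prems(1) funpow_swap[where \<mu>=rho and j=n and y=v] by simp
    then have "(rho v, fst_in rho (B - e) (rho v)) \<in> R1\<^sup>*" using Suc.IH rho_B Suc.prems(2) by blast
    then have "(\<alpha> v, fst_in rho (B - e) (rho v)) \<in> R1\<^sup>*" using s2 rv converse_rtrancl_into_rtrancl by metis
    then have "(v, fst_in rho (B - e) (rho v)) \<in> R1\<^sup>*" using s1 converse_rtrancl_into_rtrancl by metis
    then show ?thesis using st by simp
  qed
qed

lemma P1a_step: "(u, w) \<in> dstep Nb f \<Longrightarrow> (u, w) \<in> R1\<^sup>*"
proof -
  have fwd: "(x, vperm Nb x) \<in> R1\<^sup>*" if x: "x \<in> B - e" for x
  proof -
    have eq: "vperm Nb x = fst_in rho (B - e) (rho x)" using Nb_v restr_rho_fst[OF x] by simp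
    obtain n where "(rho ^^ n) (rho x) \<in> B - e" using restr_rho_ex[OF x] by blast
    then have s2: "(rho x, fst_in rho (B - e) (rho x)) \<in> R1\<^sup>*" using WK1 rho_B x by blast
    have s1: "(x, rho x) \<in> R1" using R1_v x rho_ne by simp
    show ?thesis using converse_rtrancl_into_rtrancl[OF s1 s2] eq by simp
  qed
  assume "(u, w) \<in> dstep Nb f"
  then consider (v1) "u \<in> B - e" "w = vperm Nb u" | (v2) "w \<in> B - e" "u = vperm Nb w"
    | (a1) "u \<in> B - e" "u \<notin> f" "w = eperm Nb u" | (a2) "w \<in> B - e" "w \<notin> f" "u = eperm Nb w"
    unfolding dstep_iff Nb_darts by blast
  then show ?thesis
  proof cases
    case v1 then show ?thesis using fwd by simp
  next
    case v2
    have "(w, u) \<in> R1\<^sup>*" using fwd[OF v2(1)] v2(2) by simp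
    then show ?thesis by (rule rsym_gen[OF dstep_sym])
  next
    case a1
    have "(u, w) \<in> R1" using Nb_e[OF a1(1)] R1_a a1 by simp
    then show ?thesis by simp
  next
    case a2
    have "(w, u) \<in> R1" using Nb_e[OF a2(1)] R1_a a2 by simp
    then have "(w, u) \<in> R1\<^sup>*" by simp
    then show ?thesis by (rule rsym_gen[OF dstep_sym])
  qed
qed

lemma conn_b: "x \<in> B - e \<Longrightarrow> y \<in> B - e \<Longrightarrow> (x, y) \<in> (dstep Nb f)\<^sup>*"
proof -
  assume xy: "x \<in> B - e" "y \<in> B - e"
  obtain c where c: "c \<in> B" "f = {c, \<alpha> c}" using edge_form[OF fE] by blast
  have ce: "c \<in> B - e" using c disj by blast
  have fe: "f \<in> edges Nb"
  proof -
    have "eperm Nb (eperm Nb c) = c" using Nb_e ce B_e_cl a2 by simp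
    then have "perm_orbit (eperm Nb) c = f" using orbit_invol[of "eperm Nb" c] Nb_e[OF ce] c by simp
    then show ?thesis unfolding edges_def Nb_darts using ce by blast
  qed
  have cw: "connected_without Nb f"
    using nsl fe unfolding is_sep_loop_def is_bridge_def by blast
  show ?thesis
  proof (rule DC1[OF _ _ _ _ cw])
    show "\<forall>x\<in>darts Nb. vperm Nb x \<in> darts Nb"
    proof
      fix x assume "x \<in> darts Nb"
      then have x: "x \<in> B - e" using Nb_darts by simp
      obtain N where N: "N > 0" "(rho ^^ N) x = x" by (rule rho_ret)
      have N2: "(rho ^^ N) x \<in> B - e" using N x by simp
      have "restr rho (B - e) x \<in> B - e" using restr_ex[where \<mu>=rho, OF x N(1) N2] by auto
      then show "vperm Nb x \<in> darts Nb" using Nb_v Nb_darts by simp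
    qed
    show "\<forall>x\<in>darts Nb. eperm Nb x \<in> darts Nb \<and> eperm Nb (eperm Nb x) = x"
      using Nb_darts Nb_e B_e_cl a2 by simp
    show "f = {c, eperm Nb c}" using c Nb_e[OF ce] by simp
    show "c \<in> darts Nb" using ce Nb_darts by simp
  qed (use xy Nb_darts in auto)
qed


lemma conn_a: "x \<in> B \<Longrightarrow> y \<in> B \<Longrightarrow> (x, y) \<in> (dstep M e)\<^sup>*"
proof -
  assume xy: "x \<in> B" "y \<in> B"
  obtain a where a: "a \<in> B" "e = {a, \<alpha> a}" using edge_form[OF eE] by blast
  have cw: "connected_without M e" using nb eE unfolding is_bridge_def by blast
  show ?thesis
    by (rule DC1[OF _ _ a(2) a(1) cw xy]) (use sB aB a2 in auto)
qed

lemma P1a: "x \<in> B - e \<Longrightarrow> y \<in> B - e \<Longrightarrow> (x, y) \<in> R1\<^sup>*"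
proof -
  assume xy: "x \<in> B - e" "y \<in> B - e"
  have "dstep Nb f \<subseteq> R1\<^sup>*" using P1a_step by auto
  then have "(dstep Nb f)\<^sup>* \<subseteq> R1\<^sup>*" by (rule rtrancl_subset_rtrancl)
  then show ?thesis using conn_b[OF xy] by blast
qed

lemma R1_sig: "u \<in> B \<Longrightarrow> (u, \<sigma> u) \<in> R1\<^sup>*"
proof -
  assume u: "u \<in> B"
  have s2: "(\<alpha> u, \<sigma> u) \<in> R1" using R1_v[of "\<alpha> u"] aB[OF u] a2 by simp
  show ?thesis
  proof (cases "u \<in> f")
    case False
    have "(u, \<alpha> u) \<in> R1" using R1_a u False by simp
    then show ?thesis using s2 by (meson r_into_rtrancl rtrancl_into_rtrancl)
  next
    case True
    have "u \<in> B - e" "\<alpha> u \<in> B - e" using True f_cl fB disj by auto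
    then have "(u, \<alpha> u) \<in> R1\<^sup>*" by (rule P1a)
    then show ?thesis using s2 by (rule rtrancl_into_rtrancl)
  qed
qed

lemma R1_alp: "u \<in> B \<Longrightarrow> u \<notin> e \<Longrightarrow> (u, \<alpha> u) \<in> R1\<^sup>*"
proof -
  assume u: "u \<in> B" "u \<notin> e"
  show ?thesis
  proof (cases "u \<in> f")
    case False then have "(u, \<alpha> u) \<in> R1" using R1_a u by simp
    then show ?thesis by simp
  next
    case True
    have "u \<in> B - e" "\<alpha> u \<in> B - e" using True f_cl fB disj by auto
    then show ?thesis by (rule P1a)
  qed
qed

lemma P1b: "x \<in> B \<Longrightarrow> y \<in> B \<Longrightarrow> (x, y) \<in> R1\<^sup>*"
proof -
  assume xy: "x \<in> B" "y \<in> B"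
  have "dstep M e \<subseteq> R1\<^sup>*"
  proof
    fix p assume "p \<in> dstep M e"
    then obtain u w where p: "p = (u, w)" "(u, w) \<in> dstep M e" by (cases p) auto
    from p(2) consider (v1) "u \<in> B" "w = \<sigma> u" | (v2) "w \<in> B" "u = \<sigma> w"
      | (e1) "u \<in> B" "u \<notin> e" "w = \<alpha> u" | (e2) "w \<in> B" "w \<notin> e" "u = \<alpha> w"
      unfolding dstep_iff by blast
    then have "(u, w) \<in> R1\<^sup>*"
    proof cases
      case v1 then show ?thesis using R1_sig by simp
    next
      case v2 then have "(w, u) \<in> R1\<^sup>*" using R1_sig by simp
      then show ?thesis by (rule rsym_gen[OF dstep_sym])
    next
      case e1 then show ?thesis using R1_alp by simp
    next
      case e2 then have "(w, u) \<in> R1\<^sup>*" using R1_alp by simp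
      then show ?thesis by (rule rsym_gen[OF dstep_sym])
    qed
    then show "p \<in> R1\<^sup>*" using p by simp
  qed
  then have "(dstep M e)\<^sup>* \<subseteq> R1\<^sup>*" by (rule rtrancl_subset_rtrancl)
  then show ?thesis using conn_a[OF xy] by blast
qed

lemma part1: "\<not> is_sep_loop M f"
proof -
  have "connected_without (dual M) f"
  proof (rule DC2)
    show "finite (darts (dual M))" using fin by (simp add: dual_simps)
    show "vperm (dual M) permutes darts (dual M)" using permutes_compose[OF ap sp] by (simp add: dual_simps)
    show "\<forall>x\<in>darts (dual M). eperm (dual M) x \<in> darts (dual M)" using aB by (simp add: dual_simps)
    show "\<forall>x\<in>darts (dual M). \<forall>y\<in>darts (dual M). (x, y) \<in> R1\<^sup>*" using P1b by (simp add: dual_simps)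
  qed
  then show ?thesis unfolding is_sep_loop_def is_bridge_def by blast
qed

lemma EXH: "y \<in> B \<Longrightarrow> \<exists>k. (rhof ^^ k) y \<in> B - f"
proof (rule ccontr)
  assume y: "y \<in> B" and nex: "\<not> (\<exists>k. (rhof ^^ k) y \<in> B - f)"
  define S where "S = {x \<in> B. \<forall>k. (rhof ^^ k) x \<in> f}"
  have yS: "y \<in> S" using y nex permutes_in_funpow_image[OF rhof_p y] unfolding S_def by blast
  obtain N where N: "N > 0" "rhof ^^ N = id" using perm_period[OF fin rhof_p] by metis
  have injs: "inj (\<sigma> \<circ> \<alpha>)" using permutes_inj[OF permutes_compose[OF ap sp]] .
  have cl: "w \<in> S" if uw: "(u, w) \<in> R1" and uS: "u \<in> S" for u w
  proof -
    have uf: "u \<in> f" using uS unfolding S_def by (metis (mono_tags, lifting) funpow_0 mem_Collect_eq)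
    from uw consider (v1) "u \<in> B" "w = \<sigma> (\<alpha> u)" | (v2) "w \<in> B" "u = \<sigma> (\<alpha> w)"
      | (e1) "u \<in> B" "u \<notin> f" "w = \<alpha> u" | (e2) "w \<in> B" "w \<notin> f" "u = \<alpha> w"
      unfolding dstep_iff by (auto simp: dual_simps)
    then show ?thesis
    proof cases
      case v1
      have w: "w = rhof u" using v1 rhof_f[OF uf] by simp
      have "(rhof ^^ k) w \<in> f" for k
      proof -
        have "(rhof ^^ Suc k) u \<in> f" using uS unfolding S_def by blast
        then show ?thesis using w funpow_swap[where \<mu>=rhof and j=k and y=u] by simp
      qed
      moreover have "w \<in> B" using rhof_B[OF v1(1)] w by simp
      ultimately show ?thesis unfolding S_def by blast
    next
      case v2
      define p where "p = (rhof ^^ (N - 1)) u"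
      have pk: "(rhof ^^ k) p = (rhof ^^ (k + (N - 1))) u" for k unfolding p_def by (simp add: funpow_add)
      have pf: "p \<in> f" using uS pk[of 0] unfolding S_def by simp
      have "rhof p = (rhof ^^ N) u" using pk[of 1] N(1) by simp
      then have "rhof p = u" using N(2) by simp
      then have "(\<sigma> \<circ> \<alpha>) p = (\<sigma> \<circ> \<alpha>) w" using rhof_f[OF pf] v2 by simp
      then have "p = w" using injs by (meson injD)
      moreover have "p \<in> S" using pk uS fB pf unfolding S_def by auto
      ultimately show ?thesis by simp
    next
      case e1 then show ?thesis using uf by simp
    next
      case e2 then show ?thesis using uf f_cl a2 by metis
    qed
  qed
  have reach: "(y, z) \<in> R1\<^sup>* \<Longrightarrow> z \<in> S" for z
  proof (induction rule: rtrancl_induct)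
    case base then show ?case using yS .
  next
    case (step u w) then show ?case using cl by blast
  qed
  obtain a where a: "a \<in> B" "e = {a, \<alpha> a}" using edge_form[OF eE] by blast
  have "a \<in> S" using reach P1b[OF y a(1)] by blast
  then have "a \<in> f" unfolding S_def by (metis (mono_tags, lifting) funpow_0 mem_Collect_eq)
  then show False using disj a(2) by blast
qed


abbreviation "Nc \<equiv> contract M f"
abbreviation "T \<equiv> dstep Nc e"
abbreviation "H \<equiv> fst_in rhof (B - f)"

lemma Nc_darts: "darts Nc = B - f" by (simp add: contract_simps)
lemma Nc_v: "vperm Nc x = restr rhof (B - f) x" by (simp add: contract_simps Psi_f)
lemma Nc_e: "x \<in> B - f \<Longrightarrow> eperm Nc x = \<alpha> x"
  using restr_one[where \<mu>=\<alpha>, OF _ B_f_cl] by (simp add: contract_simps)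

lemma H_id: "z \<in> B - f \<Longrightarrow> H z = z" by (rule fst_in_in)

lemma H_f: "z \<in> f \<Longrightarrow> H z = H (rhof z)"
proof -
  assume z: "z \<in> f"
  obtain k where k: "(rhof ^^ k) z \<in> B - f" using EXH fB[OF z] by blast
  show ?thesis by (rule fst_in_step[OF _ k]) (use z in simp)
qed

lemma psi: "u \<in> B - f \<Longrightarrow> vperm Nc u = H (rhof u)"
proof -
  assume u: "u \<in> B - f"
  obtain N where N: "N > 0" "(rhof ^^ N) u = u" by (rule rhof_ret)
  have N2: "(rhof ^^ N) u \<in> B - f" using N u by simp
  show ?thesis using Nc_v restr_fst[OF u N(1) N2] by simp
qed

lemma Tpsi: "u \<in> B - f \<Longrightarrow> (u, H (rhof u)) \<in> T"
  using psi[of u] by (simp add: dstep_iff Nc_darts)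

lemma Talpha: "u \<in> B \<Longrightarrow> u \<notin> e \<Longrightarrow> u \<notin> f \<Longrightarrow> (u, \<alpha> u) \<in> T"
  using Nc_e[of u] by (simp add: dstep_iff Nc_darts)

lemma WK2: "(rho ^^ n) u \<in> B - e \<Longrightarrow> u \<in> B \<Longrightarrow> (H u, H (fst_in rho (B - e) u)) \<in> T\<^sup>*"
proof (induction n arbitrary: u)
  case 0 then show ?case by (simp add: fst_in_in)
next
  case (Suc n)
  show ?case
  proof (cases "u \<in> e")
    case False then show ?thesis using Suc.prems by (simp add: fst_in_in)
  next
    case True
    have st: "fst_in rho (B - e) u = fst_in rho (B - e) (rho u)"
      using fst_in_step[where y=u and S="B - e" and \<mu>=rho and k="Suc n"] True Suc.prems(1) by simp
    have uf: "u \<notin> f" using disj[OF True] .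
    have ru: "rho u = rhof u" using rho_e[OF True] rhof_nf[OF uf] by simp
    have Hu: "H u = u" using H_id Suc.prems(2) uf by simp
    have s1: "(u, H (rhof u)) \<in> T" using Tpsi Suc.prems(2) uf by simp
    have "(rho ^^ n) (rho u) \<in> B - e" using Suc.prems(1) funpow_swap[where \<mu>=rho and j=n and y=u] by simp
    then have s2: "(H (rho u), H (fst_in rho (B - e) (rho u))) \<in> T\<^sup>*" using Suc.IH rho_B Suc.prems(2) by blast
    have "(u, H (fst_in rho (B - e) (rho u))) \<in> T\<^sup>*"
      using converse_rtrancl_into_rtrancl[OF s1] s2 ru by simp
    then show ?thesis using st Hu by simp
  qed
qed

lemma Step1: "z \<in> B - e \<Longrightarrow> (H z, H (vperm Nb z)) \<in> T\<^sup>*"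
proof -
  assume z: "z \<in> B - e"
  have eq: "vperm Nb z = fst_in rho (B - e) (rho z)" using Nb_v restr_rho_fst[OF z] by simp
  obtain n where n: "(rho ^^ n) (rho z) \<in> B - e" using restr_rho_ex[OF z] by blast
  have W: "(H (rho z), H (vperm Nb z)) \<in> T\<^sup>*" using WK2[OF n] rho_B z eq by simp
  show ?thesis
  proof (cases "z \<in> f")
    case False
    have Hz: "H z = z" using H_id z False by simp
    have t1: "(z, \<alpha> z) \<in> T" using Talpha z False by simp
    have az: "\<alpha> z \<in> B - f" using B_f_cl z False by simp
    have t2: "(\<alpha> z, H (rhof (\<alpha> z))) \<in> T" using Tpsi[OF az] .
    have "rhof (\<alpha> z) = rho z" using rhof_nf az rho_ne z by simp
    then have "(z, H (rho z)) \<in> T\<^sup>*" using t1 t2 by (metis r_into_rtrancl rtrancl_into_rtrancl)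
    then show ?thesis using W Hz by (metis rtrancl_trans)
  next
    case True
    have "H z = H (rho z)" using H_f[OF True] rhof_f[OF True] rho_ne z by simp
    then show ?thesis using W by simp
  qed
qed

lemma Step1': "z \<in> B - e \<Longrightarrow> z \<notin> f \<Longrightarrow> (H z, H (eperm Nb z)) \<in> T\<^sup>*"
proof -
  assume z: "z \<in> B - e" "z \<notin> f"
  have az: "\<alpha> z \<in> B - f" using B_f_cl z by simp
  have "(z, \<alpha> z) \<in> T" using Talpha z by simp
  then show ?thesis using Nb_e[OF z(1)] H_id az z by simp
qed

lemma P2a: "x \<in> B - e \<Longrightarrow> y \<in> B - e \<Longrightarrow> (H x, H y) \<in> T\<^sup>*"
proof -
  assume xy: "x \<in> B - e" "y \<in> B - e"
  have st: "(H u, H w) \<in> T\<^sup>*" if uw: "(u, w) \<in> dstep Nb f" for u w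
  proof -
    from uw consider (v1) "u \<in> B - e" "w = vperm Nb u" | (v2) "w \<in> B - e" "u = vperm Nb w"
      | (a1) "u \<in> B - e" "u \<notin> f" "w = eperm Nb u" | (a2) "w \<in> B - e" "w \<notin> f" "u = eperm Nb w"
      unfolding dstep_iff Nb_darts by blast
    then show ?thesis
    proof cases
      case v1 then show ?thesis using Step1 by simp
    next
      case v2 then have "(H w, H u) \<in> T\<^sup>*" using Step1 by simp
      then show ?thesis by (rule rsym_gen[OF dstep_sym])
    next
      case a1 then show ?thesis using Step1' by simp
    next
      case a2 then have "(H w, H u) \<in> T\<^sup>*" using Step1' by simp
      then show ?thesis by (rule rsym_gen[OF dstep_sym])
    qed
  qed
  show ?thesis by (rule map_rtrancl[where h=H and r="dstep Nb f", OF st conn_b[OF xy]])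
qed

lemma P2_sig: "x \<in> B \<Longrightarrow> (H x, H (\<sigma> x)) \<in> T\<^sup>*"
proof -
  assume x: "x \<in> B"
  show ?thesis
  proof (cases "x \<in> f")
    case False
    have "(x, H (rhof x)) \<in> T" using Tpsi x False by simp
    then show ?thesis using H_id x False rhof_nf[OF False] by simp
  next
    case True
    have ax: "\<alpha> x \<in> f" using f_cl[OF True] .
    have "H (\<sigma> x) = H (\<alpha> x)" using H_f[OF ax] rhof_f[OF ax] a2 by simp
    moreover have "(H x, H (\<alpha> x)) \<in> T\<^sup>*" using P2a True ax fB disj by blast
    ultimately show ?thesis by simp
  qed
qed

lemma P2_alp: "x \<in> B \<Longrightarrow> x \<notin> e \<Longrightarrow> (H x, H (\<alpha> x)) \<in> T\<^sup>*"
proof -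
  assume x: "x \<in> B" "x \<notin> e"
  show ?thesis
  proof (cases "x \<in> f")
    case False
    have "(x, \<alpha> x) \<in> T" using Talpha x False by simp
    moreover have "\<alpha> x \<in> B - f" using B_f_cl x False by simp
    ultimately show ?thesis using H_id x False by simp
  next
    case True
    then show ?thesis using P2a f_cl fB disj by blast
  qed
qed

lemma part2: "\<not> is_bridge Nc e"
proof -
  have st: "(H u, H w) \<in> T\<^sup>*" if uw: "(u, w) \<in> dstep M e" for u w
  proof -
    from uw consider (v1) "u \<in> B" "w = \<sigma> u" | (v2) "w \<in> B" "u = \<sigma> w"
      | (e1) "u \<in> B" "u \<notin> e" "w = \<alpha> u" | (e2) "w \<in> B" "w \<notin> e" "u = \<alpha> w"
      unfolding dstep_iff by blast
    then show ?thesis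
    proof cases
      case v1 then show ?thesis using P2_sig by simp
    next
      case v2 then have "(H w, H u) \<in> T\<^sup>*" using P2_sig by simp
      then show ?thesis by (rule rsym_gen[OF dstep_sym])
    next
      case e1 then show ?thesis using P2_alp by simp
    next
      case e2 then have "(H w, H u) \<in> T\<^sup>*" using P2_alp by simp
      then show ?thesis by (rule rsym_gen[OF dstep_sym])
    qed
  qed
  have "connected_without Nc e"
  proof (rule DC2)
    show "finite (darts Nc)" using fin by (simp add: Nc_darts)
    have "vperm Nc = restr rhof (B - f)" using Nc_v by (intro ext) simp
    then show "vperm Nc permutes darts Nc" using restr_permutes[OF fin rhof_p] Nc_darts by auto
    show "\<forall>x\<in>darts Nc. eperm Nc x \<in> darts Nc" using Nc_e B_f_cl Nc_darts by simp
    show "\<forall>x\<in>darts Nc. \<forall>y\<in>darts Nc. (x, y) \<in> T\<^sup>*"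
    proof (intro ballI)
      fix x y assume "x \<in> darts Nc" "y \<in> darts Nc"
      then have xy: "x \<in> B - f" "y \<in> B - f" using Nc_darts by auto
      have "(x, y) \<in> (dstep M e)\<^sup>*" using conn_a xy by simp
      then have "(H x, H y) \<in> T\<^sup>*"
      proof (induction rule: rtrancl_induct)
        case base then show ?case by simp
      next
        case (step y' z)
        have "(H y', H z) \<in> T\<^sup>*" by (rule st[OF step(2)])
        then show ?case using step(3) by (rule rtrancl_trans[rotated])
      qed
      then show "(x, y) \<in> T\<^sup>*" using H_id xy by simp
    qed
  qed
  then show ?thesis unfolding is_bridge_def by blast
qed

end


theorem lemma6:
  fixes M :: "'a cmap" and e f :: "'a set"
  assumes "is_map M"
    and "e \<in> edges M" and "f \<in> edges M" and "e \<noteq> f"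
    and "\<not> is_bridge M e"
    and "\<not> is_sep_loop (delete M e) f"
  shows "\<not> is_sep_loop M f \<and> \<not> is_bridge (contract M f) e
         \<and> contract (delete M e) f = delete (contract M f) e"
proof -
  interpret L6 M e f using assms by unfold_locales auto
  show ?thesis using part1 part2 ident by simp
qed

end
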